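(* Let $\mathcal{Q}_1\subseteq\mathcal{Q}_2$ be congruences on $\mathbb{N}^d$. Then (i) $U(\mathcal{Q}_1)\subseteq U(\mathcal{Q}_2)$, and (ii) for each $\mathbf{q}\in\mathcal{Q}_2\setminus\mathcal{Q}_1$ there exists $\mathbf{p}\in U(\mathcal{Q}_2)\setminus U(\mathcal{Q}_1)$ with $\|\mathbf{p}\|\le\|\mathbf{q}\|$.
   Context: A congruence on $\mathbb{N}^d$ is an equivalence relation $\mathcal{Q}\subseteq\mathbb{N}^d\times\mathbb{N}^d$ with $(\mathbf{a},\mathbf{b})\in\mathcal{Q}\Rightarrow(\mathbf{a}+\mathbf{c},\mathbf{b}+\mathbf{c})\in\mathcal{Q}$ (seen as a subset of $\mathbb{N}^{2d}$). $\|\cdot\|$ is the maximum norm. For $X\subseteq\mathbb{N}^k$, $X\uparrow=\{\mathbf{y}\mid\exists\mathbf{x}\in X:\mathbf{x}\le\mathbf{y}\}$ (componentwise order). For a congruence $\mathcal{Q}$, $U(\mathcal{Q})\subseteq\mathbb{N}^{4d}$ is $U(\mathcal{Q})=\{(\mathbf{x},\mathbf{y},\mathbf{u},\mathbf{v})\mid(\mathbf{x},\mathbf{y})\in\mathcal{Q},(\mathbf{x}+\mathbf{u},\mathbf{y}+\mathbf{v})\in\mathcal{Q},(\mathbf{u},\mathbf{v})\ne(\mathbf{0},\mathbf{0})\}\uparrow$. *)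

theory Defs
  imports "HOL-Library.Function_Algebras"
begin

text \<open>Vectors of \<open>\<nat>^d\<close> are represented as functions \<open>'d \<Rightarrow> nat\<close> over a finite index type \<open>'d\<close>
  (d = CARD('d)); addition and the order \<open>\<le>\<close> on functions are componentwise.\<close>

type_synonym 'd vec = "'d \<Rightarrow> nat"

definition congruence :: "('d vec \<times> 'd vec) set \<Rightarrow> bool" where
  "congruence Q \<longleftrightarrow> equiv UNIV Q \<and>
     (\<forall>a b c. (a, b) \<in> Q \<longrightarrow> (a + c, b + c) \<in> Q)"

text \<open>Maximum norm; elements of \<open>\<nat>^{2d}\<close> / \<open>\<nat>^{4d}\<close> are tuples of \<open>\<nat>^d\<close> vectors.\<close>
definition vnorm :: "('d::finite) vec \<Rightarrow> nat" where
  "vnorm x = Max (range x)"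

definition norm2 :: "('d::finite) vec \<times> 'd vec \<Rightarrow> nat" where
  "norm2 p = max (vnorm (fst p)) (vnorm (snd p))"

definition norm4 :: "('d::finite) vec \<times> 'd vec \<times> 'd vec \<times> 'd vec \<Rightarrow> nat" where
  "norm4 p = (case p of (x, y, u, v) \<Rightarrow> max (max (vnorm x) (vnorm y)) (max (vnorm u) (vnorm v)))"

definition upclose4 :: "('d vec \<times> 'd vec \<times> 'd vec \<times> 'd vec) set \<Rightarrow> ('d vec \<times> 'd vec \<times> 'd vec \<times> 'd vec) set" where
  "upclose4 X = {(y1, y2, y3, y4). \<exists>(x1, x2, x3, x4) \<in> X. x1 \<le> y1 \<and> x2 \<le> y2 \<and> x3 \<le> y3 \<and> x4 \<le> y4}"

definition U :: "('d vec \<times> 'd vec) set \<Rightarrow> ('d vec \<times> 'd vec \<times> 'd vec \<times> 'd vec) set" where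
  "U Q = upclose4 {(x, y, u, v). (x, y) \<in> Q \<and> (x + u, y + v) \<in> Q \<and> (u, v) \<noteq> (0, 0)}"

end

theory Submission
  imports Defs "HOL-Library.FuncSet"
begin

lemma vnorm_mono:
  fixes x a :: "('d::finite) vec"
  assumes "\<And>i. x i \<le> a i"
  shows "vnorm x \<le> vnorm a"
proof -
  have "\<And>i. x i \<le> vnorm a"
    using assms unfolding vnorm_def
    by (meson Max_ge finite_UNIV finite_imageI le_trans rangeI)
  then show ?thesis unfolding vnorm_def by (simp add: Max_le_iff)
qed

lemma finite_below:
  fixes a :: "('d::finite) vec"
  shows "finite {x. x \<le> a}"
proof -
  have "{x. x \<le> a} \<subseteq> PiE UNIV (\<lambda>i. {..a i})"
    by (auto simp: le_fun_def PiE_def extensional_def)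
  moreover have "finite (PiE (UNIV::'d set) (\<lambda>i. {..a i}))"
    by (rule finite_PiE) auto
  ultimately show ?thesis by (rule finite_subset)
qed

theorem lemma14:
  fixes Q1 Q2 :: "(('d::finite) vec \<times> 'd vec) set"
  assumes "congruence Q1" and "congruence Q2" and "Q1 \<subseteq> Q2"
  shows "U Q1 \<subseteq> U Q2 \<and>
         (\<forall>q \<in> Q2 - Q1. \<exists>p \<in> U Q2 - U Q1. norm4 p \<le> norm2 q)"
proof
  show "U Q1 \<subseteq> U Q2"
    using assms(3) unfolding U_def upclose4_def by fastforce
next
  have eq1: "equiv UNIV Q1" and tr1: "\<And>a b c. (a, b) \<in> Q1 \<Longrightarrow> (a + c, b + c) \<in> Q1"
    using assms(1) unfolding congruence_def by auto
  have eq2: "equiv UNIV Q2"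
    using assms(2) unfolding congruence_def by auto
  have sym1: "\<And>a b. (a, b) \<in> Q1 \<Longrightarrow> (b, a) \<in> Q1"
    using eq1 by (meson equiv_def symE)
  have trans1: "\<And>a b c. (a, b) \<in> Q1 \<Longrightarrow> (b, c) \<in> Q1 \<Longrightarrow> (a, c) \<in> Q1"
    using eq1 by (meson equiv_def transE)
  have refl1: "\<And>a. (a, a) \<in> Q1"
    using eq1 by (meson UNIV_I equiv_def refl_onD)
  show "\<forall>q \<in> Q2 - Q1. \<exists>p \<in> U Q2 - U Q1. norm4 p \<le> norm2 q"
  proof
    fix q assume q: "q \<in> Q2 - Q1"
    obtain a b where qab: "q = (a, b)" by fastforce
    define S where "S = {(x, y). x \<le> a \<and> y \<le> b \<and> (x, y) \<in> Q1}"
    define f where "f = (\<lambda>(x::'d vec, y::'d vec). sum x UNIV + sum y UNIV)"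
    have finS: "finite S"
      unfolding S_def
      by (rule finite_subset[of _ "{x. x \<le> a} \<times> {y. y \<le> b}"])
         (auto simp: finite_below)
    have "(0, 0) \<in> S" unfolding S_def using refl1 by auto
    hence neS: "S \<noteq> {}" by auto
    have "Max (f ` S) \<in> f ` S" using finS neS by (intro Max_in) auto
    then obtain s where sS: "s \<in> S" and smax: "f s = Max (f ` S)"
      by (metis imageE)
    have fmax: "\<And>z. z \<in> S \<Longrightarrow> f z \<le> f s"
      using smax finS by simp
    obtain x y where sxy: "s = (x, y)" by fastforce
    have xa: "x \<le> a" and yb: "y \<le> b" and xyQ1: "(x, y) \<in> Q1"
      using sS sxy unfolding S_def by auto
    have xyQ2: "(x, y) \<in> Q2" using xyQ1 assms(3) by auto
    have ax: "x + (a - x) = a" using xa by (auto simp: le_fun_def fun_eq_iff)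
    have by': "y + (b - y) = b" using yb by (auto simp: le_fun_def fun_eq_iff)
    have abQ2: "(a, b) \<in> Q2" and abQ1: "(a, b) \<notin> Q1" using q qab by auto
    define p where "p = (x, y, a - x, b - y)"
    have nz: "(a - x, b - y) \<noteq> (0, 0)"
    proof
      assume "(a - x, b - y) = (0, 0)"
      hence "a - x = 0" "b - y = 0" by auto
      hence "a = x" "b = y" using ax by' by auto
      thus False using xyQ1 abQ1 by simp
    qed
    have pU2: "p \<in> U Q2"
    proof -
      have "(x, y, a - x, b - y) \<in> {(x, y, u, v). (x, y) \<in> Q2 \<and> (x + u, y + v) \<in> Q2 \<and> (u, v) \<noteq> (0, 0)}"
        using xyQ2 abQ2 ax by' nz by simp
      thus ?thesis unfolding U_def upclose4_def p_def by fastforce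
    qed
    have pU1: "p \<notin> U Q1"
    proof
      assume "p \<in> U Q1"
      then obtain x' y' u' v' where le: "x' \<le> x" "y' \<le> y" "u' \<le> a - x" "v' \<le> b - y"
        and h1: "(x', y') \<in> Q1" and h2: "(x' + u', y' + v') \<in> Q1"
        and nz': "(u', v') \<noteq> (0, 0)"
        unfolding U_def upclose4_def p_def by auto
      define s' where "s' = x - x'"
      define t where "t = y - y'"
      have xs: "x = x' + s'" using le(1) unfolding s'_def by (auto simp: le_fun_def fun_eq_iff)
      have yt: "y = y' + t" using le(2) unfolding t_def by (auto simp: le_fun_def fun_eq_iff)
      have A0: "(x' + s', y' + s') \<in> Q1" using tr1[OF h1] .
      have A: "(y' + s', y' + t) \<in> Q1"
        using trans1[OF sym1[OF A0]] xyQ1 xs yt by simp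
      have B: "(x + u', y' + v' + s') \<in> Q1"
        using tr1[OF h2, of s'] xs by (simp add: ac_simps)
      have A': "(y' + v' + s', y + v') \<in> Q1"
        using tr1[OF A, of v'] yt by (simp add: ac_simps)
      have new: "(x + u', y + v') \<in> Q1" using trans1[OF B A'] .
      have "x + u' \<le> a" "y + v' \<le> b"
      proof -
        have "\<And>i. x i + u' i \<le> a i" "\<And>i. y i + v' i \<le> b i"
        proof -
          fix i
          have "u' i \<le> a i - x i" "x i \<le> a i" "v' i \<le> b i - y i" "y i \<le> b i"
            using le(3,4) xa yb by (auto simp: le_fun_def)
          thus "x i + u' i \<le> a i" "y i + v' i \<le> b i" by linarith+
        qed
        thus "x + u' \<le> a" "y + v' \<le> b" by (auto simp: le_fun_def)
      qed
      hence inS: "(x + u', y + v') \<in> S" unfolding S_def using new by auto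
      have "sum u' UNIV + sum v' UNIV > 0"
      proof -
        obtain i where "u' i > 0 \<or> v' i > 0" using nz' by (auto simp: fun_eq_iff)
        moreover have "u' i \<le> sum u' UNIV" "v' i \<le> sum v' UNIV"
          by (auto intro: member_le_sum)
        ultimately show ?thesis by linarith
      qed
      hence "f (x + u', y + v') > f s"
        unfolding f_def sxy by (simp add: sum.distrib)
      thus False using fmax[OF inS] by simp
    qed
    have "norm4 p \<le> norm2 q"
    proof -
      have "vnorm x \<le> vnorm a" "vnorm (a - x) \<le> vnorm a"
           "vnorm y \<le> vnorm b" "vnorm (b - y) \<le> vnorm b"
        using xa yb by (auto intro!: vnorm_mono simp: le_fun_def)
      thus ?thesis unfolding norm4_def norm2_def p_def qab by (auto simp: max_def)
    qed
    thus "\<exists>p \<in> U Q2 - U Q1. norm4 p \<le> norm2 q" using pU1 pU2 by blast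
  qed
qed

end
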